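(* With $O(2)$ acting on $\mathbb R[x,y]$ by $(\varphi\cdot P)=P\circ\varphi^{-1}$ and stabilizers taken in $O(2)$: (1) for $m\ge1$, the stabilizer of $p_m(x,y)$ is $D_m$, and no polynomial in $\mathbb R[x,y]$ of degree $<m$ has stabilizer equal to $D_m$; (2) for $m\ge2$, the stabilizer of $p_m(x,y)+(x^2+y^2)q_m(x,y)$ is $K_m$, and no polynomial in $\mathbb R[x,y]$ of degree $<m+2$ has stabilizer equal to $K_m$; (3) the stabilizer of $x+xy$ is $K_1=\{\mathrm{Id}\}$, and no polynomial of degree $<2$ has stabilizer $K_1$.
   Context: $\mathbb R^2=\mathbb C$, $z=x+iy$; $O(2)$ the Euclidean orthogonal group; $\sigma_m(z)=e^{2\pi i/m}z$, $\tau(z)=\bar z$; $K_m=\langle\sigma_m\rangle$, $D_m=\langle\sigma_m,\tau\rangle$; $p_m=\mathrm{Re}(z^m)$, $q_m=\mathrm{Im}(z^m)$. Degree means total degree. *)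

theory Defs
  imports "HOL-Analysis.Analysis" "HOL-Computational_Algebra.Polynomial"
begin

text \<open>Bivariate real polynomials R[x,y] are represented as polynomials in y
  whose coefficients are polynomials in x: type real poly poly.\<close>

type_synonym rpoly2 = "real poly poly"

definition X2 :: rpoly2 where "X2 = [: [:0, 1:] :]"
definition Y2 :: rpoly2 where "Y2 = [: 0, 1 :]"

text \<open>Evaluation at the point z = x + i y of R^2 = C.\<close>
definition eval2 :: "rpoly2 \<Rightarrow> complex \<Rightarrow> real" where
  "eval2 P z = poly (map_poly (\<lambda>c. poly c (Re z)) P) (Im z)"

text \<open>Total degree (the zero polynomial gets degree 0 by convention).\<close>
definition deg2 :: "rpoly2 \<Rightarrow> nat" where
  "deg2 P = Max ({0} \<union> {i + degree (coeff P i) | i. coeff P i \<noteq> 0})"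

text \<open>Real and imaginary parts of (x + i y)^m as polynomials.\<close>
fun reim :: "nat \<Rightarrow> rpoly2 \<times> rpoly2" where
  "reim 0 = (1, 0)"
| "reim (Suc n) = (case reim n of (a, b) \<Rightarrow> (a * X2 - b * Y2, a * Y2 + b * X2))"

definition pm :: "nat \<Rightarrow> rpoly2" where "pm m = fst (reim m)"
definition qm :: "nat \<Rightarrow> rpoly2" where "qm m = snd (reim m)"

definition O2 :: "(complex \<Rightarrow> complex) set" where
  "O2 = {\<phi>. orthogonal_transformation \<phi>}"

text \<open>Stabilizer in O(2) for the action (\<phi> . P) = P \<circ> \<phi>^{-1}
  (equality of polynomials is tested as equality of polynomial functions).\<close>
definition stab :: "rpoly2 \<Rightarrow> (complex \<Rightarrow> complex) set" where
  "stab P = {\<phi> \<in> O2. \<forall>z. eval2 P (inv \<phi> z) = eval2 P z}"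

definition sigma :: "nat \<Rightarrow> complex \<Rightarrow> complex" where
  "sigma m z = cis (2 * pi / real m) * z"

definition tau :: "complex \<Rightarrow> complex" where
  "tau z = cnj z"

text \<open>Subgroup generated by a set of maps of finite order (= generated monoid).\<close>
inductive_set gen :: "('a \<Rightarrow> 'a) set \<Rightarrow> ('a \<Rightarrow> 'a) set" for S where
  gen_id: "id \<in> gen S"
| gen_step: "s \<in> S \<Longrightarrow> g \<in> gen S \<Longrightarrow> s \<circ> g \<in> gen S"

definition Km :: "nat \<Rightarrow> (complex \<Rightarrow> complex) set" where
  "Km m = gen {sigma m}"

definition Dm :: "nat \<Rightarrow> (complex \<Rightarrow> complex) set" where
  "Dm m = gen {sigma m, tau}"

end

theory Submission
  imports Defs
begin

lemma eval2_alt: "eval2 P z = poly (poly P [:Im z:]) (Re z)"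
  by (induction P) (auto simp: eval2_def map_poly_pCons)

definition ev2 :: "complex poly poly \<Rightarrow> real \<Rightarrow> complex \<Rightarrow> complex" where
  "ev2 Q r u = poly (poly Q [:u:]) (of_real r)"

definition rep :: "nat \<Rightarrow> (complex \<Rightarrow> complex) \<Rightarrow> complex poly poly \<Rightarrow> bool" where
  "rep d g Q \<longleftrightarrow> (\<forall>r u. cmod u = 1 \<longrightarrow> u^d * g (of_real r * u) = ev2 Q r u) \<and>
     (\<forall>n e. coeff (coeff Q n) e \<noteq> 0 \<longrightarrow> e \<le> d \<and> n \<le> d + e \<and> d \<le> n + e \<and> even (n + e + d))"

definition R :: "nat \<Rightarrow> (complex \<Rightarrow> complex) \<Rightarrow> bool" where
  "R d g \<longleftrightarrow> (\<exists>Q. rep d g Q)"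

lemma R_const: "R 0 (\<lambda>_. c)"
proof -
  have "rep 0 (\<lambda>_. c) [:[:c:]:]"
    unfolding rep_def ev2_def by (auto simp: coeff_pCons split: nat.splits)
  thus ?thesis unfolding R_def by blast
qed

lemma R_add: assumes "R d g" "R d h" shows "R d (\<lambda>w. g w + h w)"
proof -
  obtain Q1 Q2 where q: "rep d g Q1" "rep d h Q2" using assms R_def by blast
  have "rep d (\<lambda>w. g w + h w) (Q1 + Q2)"
    unfolding rep_def
  proof (rule conjI; (intro allI impI)?)
    fix r u assume "cmod (u::complex) = 1"
    thus "u ^ d * (g (complex_of_real r * u) + h (complex_of_real r * u)) = ev2 (Q1 + Q2) r u"
      using q unfolding rep_def ev2_def by (simp add: distrib_left)
  next
    fix n e assume "coeff (coeff (Q1 + Q2) n) e \<noteq> 0"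
    hence "coeff (coeff Q1 n) e \<noteq> 0 \<or> coeff (coeff Q2 n) e \<noteq> 0" by auto
    thus "e \<le> d \<and> n \<le> d + e \<and> d \<le> n + e \<and> even (n + e + d)"
      using q unfolding rep_def by blast
  qed
  thus ?thesis unfolding R_def by blast
qed

lemma R_smult: assumes "R d g" shows "R d (\<lambda>w. c * g w)"
proof -
  obtain Q where q: "rep d g Q" using assms R_def by blast
  have "rep d (\<lambda>w. c * g w) (smult [:c:] Q)"
    unfolding rep_def
  proof (rule conjI; (intro allI impI)?)
    fix r u assume "cmod (u::complex) = 1"
    thus "u ^ d * (c * g (complex_of_real r * u)) = ev2 (smult [:c:] Q) r u"
      using q unfolding rep_def ev2_def by (simp add: algebra_simps)
  next
    fix n e assume "coeff (coeff (smult [:c:] Q) n) e \<noteq> 0"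
    hence "coeff (coeff Q n) e \<noteq> 0" by auto
    thus "e \<le> d \<and> n \<le> d + e \<and> d \<le> n + e \<and> even (n + e + d)"
      using q unfolding rep_def by blast
  qed
  thus ?thesis unfolding R_def by blast
qed

lemma R_mono: assumes "R d g" shows "R (Suc d) g"
proof -
  obtain Q where q: "rep d g Q" using assms R_def by blast
  have "rep (Suc d) g (pCons 0 Q)"
    unfolding rep_def
  proof (rule conjI; (intro allI impI)?)
    fix r u assume "cmod (u::complex) = 1"
    thus "u ^ Suc d * g (complex_of_real r * u) = ev2 (pCons 0 Q) r u"
      using q unfolding rep_def ev2_def by (simp add: algebra_simps)
  next
    fix n e assume a: "coeff (coeff (pCons 0 Q) n) e \<noteq> 0"
    then obtain k where k: "n = Suc k" by (cases n) auto
    with a have "coeff (coeff Q k) e \<noteq> 0" by auto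
    hence "e \<le> d \<and> k \<le> d + e \<and> d \<le> k + e \<and> even (k + e + d)" using q unfolding rep_def by blast
    thus "e \<le> Suc d \<and> n \<le> Suc d + e \<and> Suc d \<le> n + e \<and> even (n + e + Suc d)"
      using k by auto
  qed
  thus ?thesis unfolding R_def by blast
qed

lemma R_mono_le: assumes "R d g" "d \<le> d'" shows "R d' g"
  using assms(2,1) by (induction d' rule: dec_induct) (auto intro: R_mono)

lemma coeff_X_mult: "coeff ([:0, 1:] * (q::complex poly)) e = (if e = 0 then 0 else coeff q (e - 1))"
  by (cases e) (auto simp: coeff_pCons)

lemma R_mulz: assumes "R d g" shows "R (Suc d) (\<lambda>w. w * g w)"
proof -
  obtain Q where q: "rep d g Q" using assms R_def by blast
  have "rep (Suc d) (\<lambda>w. w * g w) (pCons 0 (pCons 0 (smult [:0,1:] Q)))"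
    unfolding rep_def
  proof (rule conjI; (intro allI impI)?)
    fix r u assume "cmod (u::complex) = 1"
    thus "u ^ Suc d * (complex_of_real r * u * g (complex_of_real r * u)) = ev2 (pCons 0 (pCons 0 (smult [:0,1:] Q))) r u"
      using q unfolding rep_def ev2_def by (simp add: algebra_simps)
  next
    fix n e assume a: "coeff (coeff (pCons 0 (pCons 0 (smult [:0,1:] Q))) n) e \<noteq> 0"
    then obtain k where k: "n = Suc (Suc k)" by (cases n; cases "n - 1") (auto)
    with a obtain f where f: "e = Suc f" "coeff (coeff Q k) f \<noteq> 0"
      by (cases e) (auto simp: coeff_X_mult)
    hence "f \<le> d \<and> k \<le> d + f \<and> d \<le> k + f \<and> even (k + f + d)" using q unfolding rep_def by blast
    thus "e \<le> Suc d \<and> n \<le> Suc d + e \<and> Suc d \<le> n + e \<and> even (n + e + Suc d)"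
      using k f by auto
  qed
  thus ?thesis unfolding R_def by blast
qed

lemma unit_cnj: "cmod u = 1 \<Longrightarrow> u * cnj u = 1"
  by (metis complex_norm_square mult.commute mult_1 of_real_1 power_one)

lemma R_mulcnj: assumes "R d g" shows "R (Suc d) (\<lambda>w. cnj w * g w)"
proof -
  obtain Q where q: "rep d g Q" using assms R_def by blast
  have "rep (Suc d) (\<lambda>w. cnj w * g w) (smult [:0,1:] Q)"
    unfolding rep_def
  proof (rule conjI; (intro allI impI)?)
    fix r u assume u: "cmod (u::complex) = 1"
    have "u ^ Suc d * (cnj (complex_of_real r * u) * g (complex_of_real r * u))
       = complex_of_real r * (u * cnj u) * (u^d * g (complex_of_real r * u))"
      by (simp add: algebra_simps)
    also have "\<dots> = complex_of_real r * ev2 Q r u" using q u unit_cnj unfolding rep_def by simp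
    finally show "u ^ Suc d * (cnj (complex_of_real r * u) * g (complex_of_real r * u)) = ev2 (smult [:0,1:] Q) r u"
      unfolding ev2_def by simp
  next
    fix n e assume a: "coeff (coeff (smult [:0,1:] Q) n) e \<noteq> 0"
    then obtain f where f: "e = Suc f" "coeff (coeff Q n) f \<noteq> 0"
      by (cases e) (auto simp: coeff_X_mult)
    hence "f \<le> d \<and> n \<le> d + f \<and> d \<le> n + f \<and> even (n + f + d)" using q unfolding rep_def by blast
    thus "e \<le> Suc d \<and> n \<le> Suc d + e \<and> Suc d \<le> n + e \<and> even (n + e + Suc d)"
      using f by auto
  qed
  thus ?thesis unfolding R_def by blast
qed

lemma R_cong: "R d g \<Longrightarrow> (\<And>w. g w = h w) \<Longrightarrow> R d h"
proof -
  assume "R d g" "\<And>w. g w = h w"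
  moreover have "g = h" using \<open>\<And>w. g w = h w\<close> by blast
  ultimately show ?thesis by simp
qed

lemma R_Re: assumes "R d g" shows "R (Suc d) (\<lambda>w. of_real (Re w) * g w)"
proof -
  have "R (Suc d) (\<lambda>w. (1/2) * (w * g w) + (1/2) * (cnj w * g w))"
    by (intro R_add R_smult R_mulz R_mulcnj assms)
  thus ?thesis
    by (rule R_cong) (simp add: complex_eq_iff field_simps)
qed

lemma R_Im: assumes "R d g" shows "R (Suc d) (\<lambda>w. of_real (Im w) * g w)"
proof -
  have "R (Suc d) (\<lambda>w. (-\<i>/2) * (w * g w) + (\<i>/2) * (cnj w * g w))"
    by (intro R_add R_smult R_mulz R_mulcnj assms)
  thus ?thesis
    by (rule R_cong) (simp add: complex_eq_iff field_simps)
qed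

lemma R_sum: "finite A \<Longrightarrow> (\<And>i. i \<in> A \<Longrightarrow> R d (f i)) \<Longrightarrow> R d (\<lambda>w. \<Sum>i\<in>A. f i w)"
proof (induction A rule: finite_induct)
  case empty
  have "R d (\<lambda>_. 0)" using R_const R_mono_le by blast
  thus ?case by simp
next
  case (insert x F)
  hence "R d (\<lambda>w. f x w + (\<Sum>i\<in>F. f i w))" by (intro R_add) auto
  thus ?case using insert by simp
qed

lemma R_polyRe: "R (degree a) (\<lambda>w. of_real (poly a (Re w)))"
proof (induction a)
  case 0
  then show ?case using R_const by simp
next
  case (pCons c p)
  show ?case
  proof (cases "p = 0")
    case True
    then show ?thesis using R_const by simp
  next
    case False
    hence "R (Suc (degree p)) (\<lambda>w. of_real c + of_real (Re w) * of_real (poly p (Re w)))"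
      using pCons by (intro R_add R_Re) (auto intro: R_mono_le[OF R_const])
    thus ?thesis using False by simp
  qed
qed

lemma R_term: "R (degree a + i) (\<lambda>w. of_real (poly a (Re w) * Im w ^ i))"
proof (induction i)
  case 0 then show ?case using R_polyRe by simp
next
  case (Suc i)
  have "R (Suc (degree a + i)) (\<lambda>w. complex_of_real (poly a (Re w) * Im w ^ Suc i))"
    using R_Im[OF Suc] by (rule R_cong) (simp add: algebra_simps)
  thus ?case by simp
qed

lemma deg2_ge: assumes "coeff P i \<noteq> 0" shows "i + degree (coeff P i) \<le> deg2 P"
proof -
  have "{i + degree (coeff P i) | i. coeff P i \<noteq> 0} \<subseteq> (\<lambda>i. i + degree (coeff P i)) ` {..degree P}"
    using le_degree by fastforce
  hence fin: "finite ({0} \<union> {i + degree (coeff P i) | i. coeff P i \<noteq> 0})"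
    using finite_subset by blast
  show ?thesis unfolding deg2_def using assms by (intro Max_ge[OF fin]) auto
qed

lemma eval2_sum: "eval2 P w = (\<Sum>i\<le>degree P. poly (coeff P i) (Re w) * Im w ^ i)"
proof -
  have "poly P [:Im w:] = (\<Sum>i\<le>degree P. coeff P i * [:Im w:] ^ i)" by (rule poly_altdef)
  hence "eval2 P w = poly (\<Sum>i\<le>degree P. coeff P i * [:Im w:] ^ i) (Re w)" by (simp add: eval2_alt)
  also have "\<dots> = (\<Sum>i\<le>degree P. poly (coeff P i) (Re w) * Im w ^ i)"
    by (simp add: poly_sum poly_power)
  finally show ?thesis .
qed

lemma R_eval2: assumes "deg2 P \<le> d" shows "R d (\<lambda>w. of_real (eval2 P w))"
proof -
  have "R d (\<lambda>w. \<Sum>i\<le>degree P. of_real (poly (coeff P i) (Re w) * Im w ^ i))"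
  proof (rule R_sum)
    fix i assume "i \<in> {..degree P}"
    show "R d (\<lambda>w. complex_of_real (poly (coeff P i) (Re w) * Im w ^ i))"
    proof (cases "coeff P i = 0")
      case True
      then show ?thesis using R_mono_le[OF R_const[of 0]] by simp
    next
      case False
      hence "degree (coeff P i) + i \<le> d" using deg2_ge[OF False] assms by simp
      thus ?thesis using R_mono_le[OF R_term] by blast
    qed
  qed simp
  thus ?thesis by (rule R_cong) (simp add: eval2_sum)
qed

lemma circle_infinite: "infinite {u::complex. cmod u = 1}"
proof
  assume fin: "finite {u::complex. cmod u = 1}"
  define N where "N = Suc (card {u::complex. cmod u = 1})"
  have "{z::complex. z ^ N = 1} \<subseteq> {u. cmod u = 1}"
    using power_eq_1_iff N_def by fastforce
  hence "card {z::complex. z ^ N = 1} \<le> card {u::complex. cmod u = 1}"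
    using fin card_mono by blast
  moreover have "card {z::complex. z ^ N = 1} = N" by (rule card_roots_unity_eq) (simp add: N_def)
  ultimately show False using N_def by simp
qed

lemma poly_zero_circle:
  assumes "\<And>u. cmod u = 1 \<Longrightarrow> poly p u = (0::complex)" shows "p = 0"
proof (rule ccontr)
  assume "p \<noteq> 0"
  hence "finite {x. poly p x = 0}" by (rule poly_roots_finite)
  moreover have "{u. cmod u = 1} \<subseteq> {x. poly p x = 0}" using assms by auto
  ultimately show False using circle_infinite finite_subset by blast
qed

lemma poly_zero_reals:
  assumes "\<And>r::real. poly p (of_real r) = (0::complex)" shows "p = 0"
proof (rule ccontr)
  assume "p \<noteq> 0"
  hence "finite {x. poly p x = 0}" by (rule poly_roots_finite)
  moreover have "range complex_of_real \<subseteq> {x. poly p x = 0}" using assms by auto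
  moreover have "infinite (range complex_of_real)"
    using infinite_UNIV_char_0 by (metis finite_imageD inj_of_real)
  ultimately show False using finite_subset by blast
qed

lemma ev2_swap: "ev2 Q r u = poly (map_poly (\<lambda>q. poly q (of_real r)) Q) u"
  unfolding ev2_def by (induction Q) (auto simp: map_poly_pCons)

definition om :: "nat \<Rightarrow> complex" where "om m = cis (2 * pi / real m)"

lemma om_pow: "om m ^ k = exp (2 * of_real pi * \<i> * of_nat k / of_nat m)"
proof -
  have "om m ^ k = cis (real k * (2*pi/real m))" unfolding om_def by (rule Complex.DeMoivre)
  also have "\<dots> = exp (2 * of_real pi * \<i> * of_nat k / of_nat m)" by (simp add: cis_conv_exp field_simps)
  finally show ?thesis .
qed

lemma om_eq: assumes "m \<ge> 1" "om m ^ n = om m ^ d" shows "n mod m = d mod m"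
  using assms complex_root_unity_eq[of m n d] by (simp add: om_pow)

lemma om_unit: "cmod (om m) = 1" by (simp add: om_def)

lemma rep_inv:
  assumes q: "rep d g Q" and inv: "\<And>w. g (om m * w) = g w"
    and c: "coeff (coeff Q n) e \<noteq> 0"
  shows "om m ^ n = om m ^ d"
proof (rule ccontr)
  assume ne: "om m ^ n \<noteq> om m ^ d"
  have "poly (coeff Q n) (of_real r) = 0" for r
  proof -
    define P where "P = map_poly (\<lambda>q. poly q (of_real r)) Q"
    have "poly (pcompose P [:0, om m:] - smult (om m ^ d) P) u = 0" if u: "cmod u = 1" for u
    proof -
      have u2: "cmod (om m * u) = 1" using u om_unit by (simp add: norm_mult)
      have "poly P (om m * u) = (om m * u)^d * g (of_real r * (om m * u))"
        using q u2 unfolding rep_def P_def ev2_swap by simp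
      also have "g (of_real r * (om m * u)) = g (of_real r * u)"
        using inv[of "of_real r * u"] by (simp add: algebra_simps)
      also have "(om m * u)^d * g (of_real r * u) = om m ^ d * (u^d * g (of_real r * u))"
        by (simp add: power_mult_distrib)
      also have "u^d * g (of_real r * u) = poly P u"
        using q u unfolding rep_def P_def ev2_swap by simp
      finally show ?thesis by (simp add: poly_pcompose mult.commute[of u])
    qed
    hence z: "pcompose P [:0, om m:] - smult (om m ^ d) P = 0" by (rule poly_zero_circle)
    have "coeff (pcompose P [:0, om m:] - smult (om m ^ d) P) n = 0" using z by simp
    hence "(om m ^ n - om m ^ d) * coeff P n = 0"
      by (simp add: coeff_pcompose_linear algebra_simps)
    hence "coeff P n = 0" using ne by simp
    thus ?thesis unfolding P_def by (simp add: coeff_map_poly)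
  qed
  hence "coeff Q n = 0" by (rule poly_zero_reals)
  thus False using c by simp
qed

lemma rep_form:
  assumes q: "rep d G Q" and m: "m \<ge> 1"
    and cnd: "\<And>n e. coeff (coeff Q n) e \<noteq> 0 \<Longrightarrow> n = d \<or> (e = m \<and> (n = d + m \<or> n + m = d))"
    and u: "cmod u = 1"
  shows "G (of_real r * u) = poly (coeff Q d) (of_real r) + of_real r ^ m *
     (coeff (coeff Q (d + m)) m * u ^ m + (if m \<le> d then coeff (coeff Q (d - m)) m else 0) * cnj u ^ m)"
proof -
  define \<alpha> where "\<alpha> = coeff (coeff Q (d + m)) m"
  define \<beta> where "\<beta> = (if m \<le> d then coeff (coeff Q (d - m)) m else 0)"
  define F where "F = coeff Q d"
  define Q' where "Q' = monom F d + monom (monom \<alpha> m) (d + m) + monom (monom \<beta> m) (d - m)"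
  have eq: "Q = Q'"
  proof (rule poly_eqI)
    fix n
    show "coeff Q n = coeff Q' n"
    proof (cases "n = d")
      case True
      then show ?thesis using m unfolding Q'_def \<beta>_def F_def by (auto simp: coeff_monom)
    next
      case nd: False
      show ?thesis
      proof (rule poly_eqI)
        fix e
        have "coeff (coeff Q n) e = (if e = m \<and> (n = d + m \<or> n + m = d) then coeff (coeff Q n) e else 0)"
          using cnd[of n e] nd by auto
        also have "\<dots> = coeff (coeff Q' n) e"
          using nd m unfolding Q'_def \<alpha>_def \<beta>_def by (auto simp: coeff_monom)
        finally show "coeff (coeff Q n) e = coeff (coeff Q' n) e" .
      qed
    qed
  qed
  have ud: "u ^ d \<noteq> 0" using u by auto
  have b: "u ^ (d - m) * \<beta> = u^d * (\<beta> * cnj u ^ m)"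
  proof (cases "m \<le> d")
    case True
    have "u ^ d = u ^ (d - m) * u ^ m" using True by (simp add: power_add[symmetric])
    hence "u^d * cnj u ^ m = u ^ (d - m) * (u * cnj u) ^ m" by (simp add: power_mult_distrib)
    then show ?thesis using unit_cnj[OF u] by (simp add: algebra_simps)
  next
    case False
    then show ?thesis unfolding \<beta>_def by simp
  qed
  have "u ^ d * G (of_real r * u) = ev2 Q r u" using q u unfolding rep_def by blast
  also have "\<dots> = ev2 Q' r u" using eq by (rule arg_cong)
  also have "\<dots> = u^d * poly F (of_real r) + u ^ (d + m) * \<alpha> * of_real r ^ m
      + u ^ (d - m) * \<beta> * of_real r ^ m"
    unfolding Q'_def ev2_def by (simp add: poly_monom algebra_simps)
  also have "\<dots> = u^d * (poly F (of_real r) + of_real r ^ m * (\<alpha> * u ^ m + \<beta> * cnj u ^ m))"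
    using b by (auto simp: power_add algebra_simps)
  finally have "G (of_real r * u) = poly F (of_real r) + of_real r ^ m * (\<alpha> * u ^ m + \<beta> * cnj u ^ m)"
    using ud u by auto
  thus ?thesis unfolding \<alpha>_def \<beta>_def F_def .
qed

lemma sigma_om: "sigma m = (\<lambda>z. om m * z)"
  by (auto simp: sigma_def om_def)

lemma om_pow_m: "om m ^ m = 1"
proof (cases "m = 0")
  case True then show ?thesis by simp
next
  case False
  have "om m ^ m = cis (real m * (2*pi/real m))" unfolding om_def by (rule Complex.DeMoivre)
  also have "\<dots> = 1" using False by simp
  finally show ?thesis .
qed

lemma Km_sub: "\<phi> \<in> Km m \<Longrightarrow> \<exists>a. a^m = 1 \<and> \<phi> = (\<lambda>z. a * z)"
  unfolding Km_def
proof (induction rule: gen.induct)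
  case gen_id
  then show ?case by (intro exI[of _ 1]) auto
next
  case (gen_step s g)
  then obtain a where a: "a^m = 1" "g = (\<lambda>z. a * z)" by blast
  have "(om m * a)^m = 1" using a om_pow_m by (simp add: power_mult_distrib)
  moreover have "s \<circ> g = (\<lambda>z. (om m * a) * z)" using gen_step a by (auto simp: sigma_om)
  ultimately show ?case by blast
qed

lemma Dm_sub: "\<phi> \<in> Dm m \<Longrightarrow> \<exists>a. a^m = 1 \<and> (\<phi> = (\<lambda>z. a * z) \<or> \<phi> = (\<lambda>z. a * cnj z))"
  unfolding Dm_def
proof (induction rule: gen.induct)
  case gen_id
  then show ?case by (intro exI[of _ 1]) auto
next
  case (gen_step s g)
  then obtain a where a: "a^m = 1" "g = (\<lambda>z. a * z) \<or> g = (\<lambda>z. a * cnj z)" by blast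
  have "(om m * a)^m = 1" using a om_pow_m by (simp add: power_mult_distrib)
  have ca: "(cnj a)^m = 1" using a by (metis complex_cnj_one complex_cnj_power)
  have oa: "(om m * a)^m = 1" using a om_pow_m by (simp add: power_mult_distrib)
  from gen_step.hyps(1) have "s = sigma m \<or> s = tau" by auto
  thus ?case
  proof
    assume s: "s = sigma m"
    from a(2) show ?thesis
    proof
      assume "g = (\<lambda>z. a * z)"
      hence "s \<circ> g = (\<lambda>z. (om m * a) * z)" using s by (auto simp: sigma_om)
      thus ?thesis using oa by blast
    next
      assume "g = (\<lambda>z. a * cnj z)"
      hence "s \<circ> g = (\<lambda>z. (om m * a) * cnj z)" using s by (auto simp: sigma_om)
      thus ?thesis using oa by blast
    qed
  next
    assume s: "s = tau"
    from a(2) show ?thesis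
    proof
      assume "g = (\<lambda>z. a * z)"
      hence "s \<circ> g = (\<lambda>z. cnj a * cnj z)" using s by (auto simp: tau_def)
      thus ?thesis using ca by blast
    next
      assume "g = (\<lambda>z. a * cnj z)"
      hence "s \<circ> g = (\<lambda>z. cnj a * z)" using s by (auto simp: tau_def)
      thus ?thesis using ca by blast
    qed
  qed
qed

lemma gen_rot: "sigma m \<in> S \<Longrightarrow> (\<lambda>z. om m ^ k * z) \<in> gen S"
proof (induction k)
  case 0
  have "(\<lambda>z::complex. om m ^ 0 * z) = id" by auto
  then show ?case using gen.gen_id by simp
next
  case (Suc k)
  have "sigma m \<circ> (\<lambda>z. om m ^ k * z) \<in> gen S" using Suc by (intro gen.gen_step) auto
  moreover have "sigma m \<circ> (\<lambda>z. om m ^ k * z) = (\<lambda>z. om m ^ Suc k * z)"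
    by (auto simp: sigma_om)
  ultimately show ?case by simp
qed

lemma gen_refl: "sigma m \<in> S \<Longrightarrow> tau \<in> S \<Longrightarrow> (\<lambda>z. om m ^ k * cnj z) \<in> gen S"
proof (induction k)
  case 0
  have "tau \<circ> id \<in> gen S" using 0 by (intro gen.gen_step gen.gen_id)
  moreover have "tau \<circ> id = (\<lambda>z::complex. om m ^ 0 * cnj z)" by (auto simp: tau_def)
  ultimately show ?case by simp
next
  case (Suc k)
  have "sigma m \<circ> (\<lambda>z. om m ^ k * cnj z) \<in> gen S" using Suc by (intro gen.gen_step) auto
  moreover have "sigma m \<circ> (\<lambda>z. om m ^ k * cnj z) = (\<lambda>z. om m ^ Suc k * cnj z)"
    by (auto simp: sigma_om)
  ultimately show ?case by simp
qed

lemma root_is_om_pow: assumes "m \<ge> 1" "a ^ m = (1::complex)" shows "\<exists>k. a = om m ^ k"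
proof -
  have "a \<in> {z. z ^ m = 1}" using assms by simp
  moreover have "(\<lambda>k. cis (2 * pi * real k / real m)) ` {..<m} = {z. z ^ m = 1}"
    using bij_betw_imp_surj_on[OF Complex.bij_betw_roots_unity[of m]] assms by simp
  ultimately obtain k where "a = cis (2 * pi * real k / real m)" by (metis (no_types, lifting) imageE)
  moreover have "om m ^ k = cis (real k * (2*pi/real m))" unfolding om_def by (rule Complex.DeMoivre)
  ultimately show ?thesis by (metis times_divide_eq_right mult.commute mult.assoc)
qed

lemma rot_in_Km: "m \<ge> 1 \<Longrightarrow> a ^ m = 1 \<Longrightarrow> (\<lambda>z. a * z) \<in> Km m"
  using root_is_om_pow gen_rot unfolding Km_def by blast

lemma rot_in_Dm: "m \<ge> 1 \<Longrightarrow> a ^ m = 1 \<Longrightarrow> (\<lambda>z. a * z) \<in> Dm m"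
  using root_is_om_pow gen_rot unfolding Dm_def by blast

lemma refl_in_Dm: "m \<ge> 1 \<Longrightarrow> a ^ m = 1 \<Longrightarrow> (\<lambda>z. a * cnj z) \<in> Dm m"
  using root_is_om_pow gen_refl unfolding Dm_def by blast

lemma sigma_in_Km: "sigma m \<in> Km m"
proof -
  have "sigma m \<circ> id \<in> Km m" unfolding Km_def by (intro gen.gen_step gen.gen_id) auto
  thus ?thesis by simp
qed

lemma sigma_in_Dm: "sigma m \<in> Dm m"
proof -
  have "sigma m \<circ> id \<in> Dm m" unfolding Dm_def by (intro gen.gen_step gen.gen_id) auto
  thus ?thesis by simp
qed

lemma root_unit: "m \<ge> 1 \<Longrightarrow> a ^ m = (1::complex) \<Longrightarrow> cmod a = 1"
  using power_eq_1_iff by fastforce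

lemma unit_re1: "cmod w = 1 \<Longrightarrow> Re w = 1 \<Longrightarrow> w = 1"
proof -
  assume a: "cmod w = 1" "Re w = 1"
  have "(cmod w)^2 = Re w ^2 + Im w ^2" by (rule cmod_power2)
  hence "Im w = 0" using a by simp
  thus "w = 1" using a by (simp add: complex_eq_iff)
qed

lemma refl_not_rot: "cmod v = 1 \<Longrightarrow> (\<lambda>z. v * cnj z) \<noteq> (\<lambda>z. a * z)"
proof
  assume v: "cmod v = 1" and e: "(\<lambda>z. v * cnj z) = (\<lambda>z. a * z)"
  have "v = a" using fun_cong[OF e, of 1] by simp
  moreover have "- v * \<i> = a * \<i>" using fun_cong[OF e, of \<i>] by simp
  ultimately have "v = 0" by (simp add: complex_eq_iff)
  thus False using v by simp
qed

lemma polar: "\<exists>u. cmod u = 1 \<and> w = of_real (cmod w) * u"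
proof (cases "w = 0")
  case True then show ?thesis by (intro exI[of _ 1]) auto
next
  case False
  then show ?thesis by (intro exI[of _ "sgn w"]) (auto simp: sgn_eq norm_divide)
qed

lemma eval2_mult[simp]: "eval2 (P * Q) z = eval2 P z * eval2 Q z"
  by (simp add: eval2_alt)
lemma eval2_add[simp]: "eval2 (P + Q) z = eval2 P z + eval2 Q z"
  by (simp add: eval2_alt)
lemma eval2_diff[simp]: "eval2 (P - Q) z = eval2 P z - eval2 Q z"
  by (simp add: eval2_alt)
lemma eval2_one[simp]: "eval2 1 z = 1"
  by (simp add: eval2_alt)
lemma eval2_zero[simp]: "eval2 0 z = 0"
  by (simp add: eval2_alt)
lemma eval2_power[simp]: "eval2 (P ^ n) z = eval2 P z ^ n"
  by (induction n) auto
lemma eval2_X2[simp]: "eval2 X2 z = Re z"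
  by (simp add: eval2_alt X2_def)
lemma eval2_Y2[simp]: "eval2 Y2 z = Im z"
  by (simp add: eval2_alt Y2_def)

lemma eval2_reim: "eval2 (pm n) z = Re (z^n) \<and> eval2 (qm n) z = Im (z^n)"
proof (induction n)
  case 0 thus ?case by (simp add: pm_def qm_def)
next
  case (Suc n)
  obtain a b where ab: "reim n = (a,b)" by force
  with Suc have "eval2 a z = Re (z^n)" "eval2 b z = Im (z^n)" by (auto simp: pm_def qm_def)
  thus ?case using ab by (simp add: pm_def qm_def)
qed

lemma rot_O2: "cmod a = 1 \<Longrightarrow> orthogonal_transformation (\<lambda>z. a*z)"
  by (auto simp: orthogonal_transformation linear_iff norm_mult scaleR_conv_of_real algebra_simps)

lemma refl_O2: "cmod a = 1 \<Longrightarrow> orthogonal_transformation (\<lambda>z. a*cnj z)"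
  by (auto simp: orthogonal_transformation linear_iff norm_mult scaleR_conv_of_real algebra_simps)

lemma stab_iff:
  assumes "orthogonal_transformation \<phi>"
  shows "\<phi> \<in> stab P \<longleftrightarrow> (\<forall>z. eval2 P (\<phi> z) = eval2 P z)"
proof -
  have b: "bij \<phi>" using assms orthogonal_transformation_bij by blast
  hence i: "inv \<phi> (\<phi> z) = z" "\<phi> (inv \<phi> z) = z" for z
    by (auto simp: bij_def inv_f_f surj_f_inv_f)
  show ?thesis
  proof
    assume "\<phi> \<in> stab P"
    hence h: "\<And>z. eval2 P (inv \<phi> z) = eval2 P z" unfolding stab_def by blast
    show "\<forall>z. eval2 P (\<phi> z) = eval2 P z"
    proof
      fix z show "eval2 P (\<phi> z) = eval2 P z" using h[of "\<phi> z"] i(1)[of z] by simp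
    qed
  next
    assume h: "\<forall>z. eval2 P (\<phi> z) = eval2 P z"
    have "eval2 P (inv \<phi> z) = eval2 P z" for z using h[rule_format, of "inv \<phi> z"] i(2)[of z] by simp
    thus "\<phi> \<in> stab P" unfolding stab_def O2_def using assms by blast
  qed
qed

lemma O2_char:
  assumes "orthogonal_transformation \<phi>"
  shows "\<exists>a. cmod a = 1 \<and> (\<phi> = (\<lambda>z. a*z) \<or> \<phi> = (\<lambda>z. a * cnj z))"
proof -
  define a where "a = \<phi> 1"
  define b where "b = \<phi> \<i>"
  have lin: "linear \<phi>" using assms orthogonal_transformation_linear by blast
  have na: "cmod a = 1" using orthogonal_transformation_norm[OF assms, of 1] a_def by simp
  have nb: "cmod b = 1" using orthogonal_transformation_norm[OF assms, of \<i>] b_def by simp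
  have ip: "a \<bullet> b = 0" using assms unfolding orthogonal_transformation_def a_def b_def
    by (simp add: inner_complex_def)
  have phi: "\<phi> z = Re z *\<^sub>R a + Im z *\<^sub>R b" for z
  proof -
    have "z = Re z *\<^sub>R 1 + Im z *\<^sub>R \<i>" by (simp add: complex_eq_iff)
    hence "\<phi> z = \<phi> (Re z *\<^sub>R 1 + Im z *\<^sub>R \<i>)" by simp
    also have "\<dots> = Re z *\<^sub>R a + Im z *\<^sub>R b"
      using lin by (simp add: linear_add linear_scale a_def b_def)
    finally show ?thesis .
  qed
  define l where "l = Re a * Im b - Im a * Re b"
  have ip': "Re a * Re b + Im a * Im b = 0" using ip by (simp add: inner_complex_def)
  have na': "Re a ^ 2 + Im a ^ 2 = 1" using na by (simp add: cmod_def)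
  have nb': "Re b ^ 2 + Im b ^ 2 = 1" using nb by (simp add: cmod_def)
  have "(Re a * Re b + Im a * Im b)^2 + l^2 = (Re a ^ 2 + Im a ^ 2) * (Re b ^ 2 + Im b ^ 2)"
    by (simp add: l_def power2_eq_square algebra_simps)
  hence l2: "l^2 = 1" using ip' na' nb' by simp
  have bRe: "Re b = - Im a * l"
  proof -
    have "Re b = Re b * (Re a ^ 2 + Im a ^ 2)" using na' by simp
    also have "\<dots> = Re a * (Re a * Re b + Im a * Im b) - Im a * l"
      by (simp add: l_def power2_eq_square algebra_simps)
    finally show ?thesis using ip' by simp
  qed
  have bIm: "Im b = Re a * l"
  proof -
    have "Im b = Im b * (Re a ^ 2 + Im a ^ 2)" using na' by simp
    also have "\<dots> = Im a * (Re a * Re b + Im a * Im b) + Re a * l"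
      by (simp add: l_def power2_eq_square algebra_simps)
    finally show ?thesis using ip' by simp
  qed
  have "l = 1 \<or> l = -1" using l2 by (simp add: power2_eq_1_iff)
  thus ?thesis
  proof
    assume l: "l = 1"
    have "\<phi> z = a*z" for z
      unfolding phi complex_eq_iff using bRe bIm l by simp
    hence "\<phi> = (\<lambda>z. a*z)" by blast
    thus ?thesis using na by blast
  next
    assume l: "l = -1"
    have "\<phi> z = a*cnj z" for z
      unfolding phi complex_eq_iff using bRe bIm l by simp
    hence "\<phi> = (\<lambda>z. a*cnj z)" by blast
    thus ?thesis using na by blast
  qed
qed

lemma stab_rot: "cmod a = 1 \<Longrightarrow> (\<lambda>z. a*z) \<in> stab P \<longleftrightarrow> (\<forall>z. eval2 P (a*z) = eval2 P z)"
  using stab_iff rot_O2 by blast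
lemma stab_refl: "cmod a = 1 \<Longrightarrow> (\<lambda>z. a*cnj z) \<in> stab P \<longleftrightarrow> (\<forall>z. eval2 P (a*cnj z) = eval2 P z)"
  using stab_iff refl_O2 by blast

lemma stab_O2: "\<phi> \<in> stab P \<Longrightarrow> orthogonal_transformation \<phi>"
  unfolding stab_def O2_def by blast

lemma mod_close: assumes "n mod m = d mod (m::nat)" "n < d + m" "d < n + m" shows "n = d"
proof (cases "d \<le> n")
  case True
  hence "m dvd n - d" using assms(1) mod_eq_dvd_iff_nat by metis
  moreover have "n - d < m" using assms True by simp
  ultimately have "n - d = 0" using nat_dvd_not_less by (metis gr0I)
  thus ?thesis using True by simp
next
  case False
  hence "m dvd d - n" using assms(1) mod_eq_dvd_iff_nat by (metis nat_le_linear)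
  moreover have "d - n < m" using assms False by simp
  ultimately have "d - n = 0" using nat_dvd_not_less by (metis gr0I)
  thus ?thesis using False by simp
qed

lemma cnd_arith:
  assumes m: "m \<ge> 2" and md: "n mod m = d mod (m::nat)" and c: "e \<le> d" "d \<le> m + 1" "n \<le> d + e" "d \<le> n + e" "even (n + e + d)"
  shows "n = d \<or> (e = m \<and> (n = d + m \<or> n + m = d))"
proof (cases "d \<le> n")
  case True
  hence "m dvd n - d" using md mod_eq_dvd_iff_nat by metis
  then obtain j where j: "n - d = m * j" by (auto simp: dvd_def)
  show ?thesis
  proof (cases "j = 0")
    case True then show ?thesis using j \<open>d \<le> n\<close> by simp
  next
    case False
    show ?thesis
    proof (cases "j = 1")
      case True
      hence "n = d + m" using j \<open>d \<le> n\<close> by simp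
      thus ?thesis using c m by presburger
    next
      case j1: False
      hence "m * j \<ge> m * 2" using False by (intro mult_le_mono2) simp
      thus ?thesis using j c m by linarith
    qed
  qed
next
  case False
  hence "m dvd d - n" using md mod_eq_dvd_iff_nat by (metis nat_le_linear)
  then obtain j where j: "d - n = m * j" by (auto simp: dvd_def)
  show ?thesis
  proof (cases "j = 0")
    case True then show ?thesis using j False by simp
  next
    case j0: False
    show ?thesis
    proof (cases "j = 1")
      case True
      hence "n + m = d" using j False by simp
      thus ?thesis using c m by presburger
    next
      case j1: False
      hence "m * j \<ge> m * 2" using j0 by (intro mult_le_mono2) simp
      thus ?thesis using j c m False by linarith
    qed
  qed
qed

lemma exists_v: assumes "m \<ge> (1::nat)" shows "\<exists>v. cmod v = 1 \<and> \<gamma> * v^m = cnj \<gamma>"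
proof (cases "\<gamma> = 0")
  case True then show ?thesis by (intro exI[of _ 1]) auto
next
  case False
  define t where "t = cnj \<gamma> / \<gamma>"
  have t: "cmod t = 1" using False by (simp add: t_def norm_divide)
  hence t0: "t \<noteq> 0" by auto
  define v where "v = cis (Arg t / real m)"
  have "v ^ m = cis (real m * (Arg t / real m))" unfolding v_def by (rule Complex.DeMoivre)
  also have "\<dots> = cis (Arg t)" using assms by simp
  also have "\<dots> = sgn t" using t0 by (rule cis_Arg)
  also have "\<dots> = t" using t by (simp add: sgn_eq)
  finally have "\<gamma> * v ^ m = cnj \<gamma>" using False by (simp add: t_def)
  moreover have "cmod v = 1" by (simp add: v_def)
  ultimately show ?thesis by blast
qed

lemma refl_in_stab:
  assumes q: "rep d (\<lambda>w. of_real (eval2 P w)) Q" and m: "m \<ge> 1"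
    and cnd: "\<And>n e. coeff (coeff Q n) e \<noteq> 0 \<Longrightarrow> n = d \<or> (e = m \<and> (n = d + m \<or> n + m = d))"
  shows "\<exists>v. cmod v = 1 \<and> (\<lambda>z. v * cnj z) \<in> stab P"
proof -
  define \<alpha> where "\<alpha> = coeff (coeff Q (d + m)) m"
  define \<beta> where "\<beta> = (if m \<le> d then coeff (coeff Q (d - m)) m else 0)"
  define F where "F = coeff Q d"
  define \<gamma> where "\<gamma> = \<alpha> + cnj \<beta>"
  have form: "eval2 P w = Re (poly F (of_real (cmod w))) + Re (\<gamma> * w^m)" for w
  proof -
    obtain u where u: "cmod u = 1" "w = of_real (cmod w) * u" using polar by blast
    define r where "r = cmod w"
    have w: "w = of_real r * u" using u r_def by simp
    have "eval2 P w = Re (of_real (eval2 P (of_real r * u)))" using w by simp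
    also have "of_real (eval2 P (of_real r * u)) = poly F (of_real r) + of_real r ^ m * (\<alpha> * u ^ m + \<beta> * cnj u ^ m)"
      using rep_form[OF q m cnd u(1)] unfolding \<alpha>_def \<beta>_def F_def by blast
    also have "of_real r ^ m * (\<alpha> * u ^ m + \<beta> * cnj u ^ m) = \<alpha> * w^m + \<beta> * cnj (w^m)"
      by (simp add: w power_mult_distrib algebra_simps)
    finally show ?thesis by (simp add: \<gamma>_def r_def algebra_simps del: complex_cnj_power)
  qed
  obtain v where v: "cmod v = 1" "\<gamma> * v^m = cnj \<gamma>" using exists_v m by blast
  have "eval2 P (v * cnj z) = eval2 P z" for z
  proof -
    have e: "\<gamma> * (v * cnj z) ^ m = cnj (\<gamma> * z^m)"
      by (simp add: power_mult_distrib v(2)[symmetric] mult.assoc)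
    have "Re (\<gamma> * (v * cnj z) ^ m) = Re (\<gamma> * z^m)" by (simp only: e cnj.sel(1))
    moreover have "cmod (v * cnj z) = cmod z" using v(1) by (simp add: norm_mult)
    ultimately show ?thesis unfolding form by simp
  qed
  thus ?thesis using stab_refl v(1) by blast
qed

lemma cnj_pow_Re: "Re (cnj z ^ m) = Re (z ^ m)"
  by (metis complex_cnj_power cnj.sel(1))
lemma cnj_pow_Im: "Im (cnj z ^ m) = - Im (z ^ m)"
  by (metis complex_cnj_power cnj.sel(2))

lemma thm1a: assumes m: "m \<ge> 1" shows "stab (pm m) = Dm m"
proof (rule set_eqI, rule iffI)
  fix \<phi> assume \<phi>: "\<phi> \<in> stab (pm m)"
  have ot: "orthogonal_transformation \<phi>" using stab_O2[OF \<phi>] .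
  obtain a where a: "cmod a = 1" "\<phi> = (\<lambda>z. a*z) \<or> \<phi> = (\<lambda>z. a * cnj z)" using O2_char[OF ot] by blast
  have inv: "\<And>z. Re ((\<phi> z)^m) = Re (z^m)" using stab_iff[OF ot] \<phi> eval2_reim by simp
  have "\<phi> 1 = a" using a by auto
  hence "Re (a^m) = 1" using inv[of 1] by simp
  moreover have "cmod (a^m) = 1" by (simp add: norm_power a)
  ultimately have "a^m = 1" using unit_re1 by blast
  thus "\<phi> \<in> Dm m" using a rot_in_Dm refl_in_Dm m by auto
next
  fix \<phi> assume "\<phi> \<in> Dm m"
  then obtain a where a: "a^m = 1" "\<phi> = (\<lambda>z. a*z) \<or> \<phi> = (\<lambda>z. a * cnj z)" using Dm_sub by blast
  have au: "cmod a = 1" using root_unit m a by blast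
  from a(2) show "\<phi> \<in> stab (pm m)"
  proof
    assume ph: "\<phi> = (\<lambda>z. a*z)"
    have "\<forall>z. eval2 (pm m) (a*z) = eval2 (pm m) z"
    proof
      fix z
      have "(a*z)^m = z^m" using a(1) by (simp add: power_mult_distrib)
      thus "eval2 (pm m) (a*z) = eval2 (pm m) z" by (simp add: eval2_reim)
    qed
    thus ?thesis using stab_rot[OF au] ph by simp
  next
    assume ph: "\<phi> = (\<lambda>z. a*cnj z)"
    have "\<forall>z. eval2 (pm m) (a*cnj z) = eval2 (pm m) z"
    proof
      fix z
      have "(a*cnj z)^m = cnj z^m" using a(1) by (simp add: power_mult_distrib)
      thus "eval2 (pm m) (a*cnj z) = eval2 (pm m) z" by (simp add: eval2_reim cnj_pow_Re)
    qed
    thus ?thesis using stab_refl[OF au] ph by simp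
  qed
qed

lemma get_rep: "\<exists>Q. rep (deg2 P) (\<lambda>w. complex_of_real (eval2 P w)) Q"
  using R_eval2[of P "deg2 P"] unfolding R_def by auto

lemma rep_bounds: "rep d g Q \<Longrightarrow> coeff (coeff Q n) e \<noteq> 0 \<Longrightarrow>
   e \<le> d \<and> n \<le> d + e \<and> d \<le> n + e \<and> even (n + e + d)"
  unfolding rep_def by blast

lemma sig_inv: assumes "sigma m \<in> stab P"
  shows "\<And>w. complex_of_real (eval2 P (om m * w)) = complex_of_real (eval2 P w)"
  using assms stab_rot[OF om_unit] sigma_om by simp

lemma thm1b: assumes m: "m \<ge> 1" and dP: "deg2 P < m" shows "stab P \<noteq> Dm m"
proof
  assume st: "stab P = Dm m"
  define d where "d = deg2 P"
  define G where "G = (\<lambda>w. complex_of_real (eval2 P w))"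
  obtain Q where q: "rep d G Q" using get_rep unfolding d_def G_def by blast
  have sig: "\<And>w. G (om m * w) = G w" using sig_inv[of m P] st sigma_in_Dm unfolding G_def by simp
  have cnd: "n = d" if c: "coeff (coeff Q n) e \<noteq> 0" for n e
  proof -
    have "n mod m = d mod m" using om_eq[OF m rep_inv[OF q sig c]] .
    moreover have "e \<le> d \<and> n \<le> d + e \<and> d \<le> n + e" using rep_bounds[OF q c] by blast
    moreover have "d < m" using dP d_def by simp
    ultimately have "n mod m = d mod m" "n < d + m" "d < n + m" by auto
    thus ?thesis by (rule mod_close)
  qed
  have cnd': "n = d \<or> (e = m \<and> (n = d + m \<or> n + m = d))" if c: "coeff (coeff Q n) e \<noteq> 0" for n e
    using cnd[OF c] by blast
  have Gc: "G (of_real r * u) = poly (coeff Q d) (of_real r)" if u: "cmod u = 1" for r u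
  proof -
    have "coeff (coeff Q (d + m)) m = 0" using cnd[of "d+m" m] m by auto
    moreover have "\<not> m \<le> d" using dP d_def by simp
    moreover note rep_form[OF q m cnd' u, of r]
    ultimately show ?thesis by simp
  qed
  define c where "c = cis (pi / real m)"
  have cu: "cmod c = 1" by (simp add: c_def)
  have "eval2 P (c*z) = eval2 P z" for z
  proof -
    obtain u where u: "cmod u = 1" "z = of_real (cmod z) * u" using polar by blast
    have cz: "c * z = of_real (cmod z) * (c * u)" by (metis u(2) mult.left_commute)
    have cu2: "cmod (c * u) = 1" using cu u(1) by (simp add: norm_mult)
    have "G (c*z) = G (of_real (cmod z) * (c*u))" using cz by (rule arg_cong)
    also have "\<dots> = poly (coeff Q d) (of_real (cmod z))" using Gc[OF cu2] .
    also have "\<dots> = G (of_real (cmod z) * u)" using Gc[OF u(1)] by simp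
    also have "\<dots> = G z" using u(2)[symmetric] by simp
    finally show ?thesis unfolding G_def by simp
  qed
  hence "(\<lambda>z. c*z) \<in> Dm m" using stab_rot[OF cu] st by blast
  then obtain a where a: "a^m = 1" "(\<lambda>z. c*z) = (\<lambda>z. a*z) \<or> (\<lambda>z. c*z) = (\<lambda>z. a * cnj z)"
    using Dm_sub by blast
  from a(2) show False
  proof
    assume "(\<lambda>z. c*z) = (\<lambda>z. a*z)"
    hence "c = a" by (metis mult_1_right)
    hence "c^m = 1" using a by simp
    moreover have "c^m = cis (real m * (pi / real m))" unfolding c_def by (rule Complex.DeMoivre)
    moreover have "cis (real m * (pi / real m)) = -1" using m by simp
    ultimately show False by simp
  next
    assume e: "(\<lambda>z. c*z) = (\<lambda>z. a*cnj z)"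
    have "cmod a = 1" using root_unit m a by blast
    thus False using refl_not_rot[of a c] e by simp
  qed
qed

lemma eval2_h2: "eval2 (pm m + (X2^2 + Y2^2) * qm m) z = Re (z^m) + cmod z ^ 2 * Im (z^m)"
  by (simp add: eval2_reim cmod_power2)

lemma thm2a: assumes m: "m \<ge> 2" shows "stab (pm m + (X2^2 + Y2^2) * qm m) = Km m"
proof (rule set_eqI, rule iffI)
  fix \<phi> assume \<phi>: "\<phi> \<in> stab (pm m + (X2^2 + Y2^2) * qm m)"
  have ot: "orthogonal_transformation \<phi>" using stab_O2[OF \<phi>] .
  obtain a where a: "cmod a = 1" "\<phi> = (\<lambda>z. a*z) \<or> \<phi> = (\<lambda>z. a * cnj z)" using O2_char[OF ot] by blast
  have inv: "\<And>z. Re ((\<phi> z)^m) + cmod (\<phi> z) ^ 2 * Im ((\<phi> z)^m) = Re (z^m) + cmod z ^ 2 * Im (z^m)"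
    using stab_iff[OF ot] \<phi> eval2_h2 by metis
  define A where "A = a^m"
  have p1: "\<phi> 1 = a" using a by auto
  have p2: "\<phi> (of_real 2) = of_real 2 * a" using a by auto
  have e1: "Re A + Im A = 1" using inv[of 1] p1 a(1) by (simp add: A_def)
  have "(of_real 2 * a) ^ m = of_real (2^m) * A" by (simp add: A_def power_mult_distrib)
  hence "2^m * Re A + 4 * (2^m * Im A) = 2^m" using inv[of "of_real 2"] p2 a(1)
    by (simp add: norm_mult)
  hence "(2::real)^m * (Re A + 4 * Im A) = 2^m * 1" by (simp add: algebra_simps)
  hence e2: "Re A + 4 * Im A = 1" by (subst (asm) mult_cancel_left) simp
  have "A = 1" using e1 e2 by (simp add: complex_eq_iff)
  from a(2) show "\<phi> \<in> Km m"
  proof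
    assume "\<phi> = (\<lambda>z. a*z)"
    thus ?thesis using rot_in_Km \<open>A = 1\<close> m by (simp add: A_def)
  next
    assume ph: "\<phi> = (\<lambda>z. a*cnj z)"
    define z0 where "z0 = cis (pi / (2 * real m))"
    have "z0 ^ m = cis (real m * (pi / (2 * real m)))" unfolding z0_def by (rule Complex.DeMoivre)
    also have "\<dots> = \<i>" using m by simp
    finally have z0m: "z0 ^ m = \<i>" .
    have "(\<phi> z0) ^ m = A * cnj (z0 ^ m)" using ph by (simp add: A_def power_mult_distrib)
    hence "(\<phi> z0) ^ m = - \<i>" using \<open>A = 1\<close> z0m by simp
    moreover have "cmod (\<phi> z0) = 1" using ph a(1) by (simp add: norm_mult z0_def)
    moreover have "cmod z0 = 1" by (simp add: z0_def)
    ultimately show ?thesis using inv[of z0] z0m by simp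
  qed
next
  fix \<phi> assume "\<phi> \<in> Km m"
  then obtain a where a: "a^m = 1" "\<phi> = (\<lambda>z. a*z)" using Km_sub by blast
  have au: "cmod a = 1" using root_unit m a by (meson le_trans one_le_numeral)
  show "\<phi> \<in> stab (pm m + (X2^2 + Y2^2) * qm m)"
  proof -
    have "\<forall>z. eval2 (pm m + (X2^2 + Y2^2) * qm m) (a*z) = eval2 (pm m + (X2^2 + Y2^2) * qm m) z"
      unfolding eval2_h2 using a au by (simp add: power_mult_distrib norm_mult)
    thus ?thesis using stab_rot[OF au] a by simp
  qed
qed

lemma thm2b: assumes m: "m \<ge> 2" and dP: "deg2 P < m + 2" shows "stab P \<noteq> Km m"
proof
  assume st: "stab P = Km m"
  have m1: "m \<ge> 1" using m by simp
  define d where "d = deg2 P"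
  define G where "G = (\<lambda>w. complex_of_real (eval2 P w))"
  obtain Q where q: "rep d G Q" using get_rep unfolding d_def G_def by blast
  have sig: "\<And>w. G (om m * w) = G w" using sig_inv[of m P] st sigma_in_Km unfolding G_def by simp
  have cnd: "n = d \<or> (e = m \<and> (n = d + m \<or> n + m = d))" if c: "coeff (coeff Q n) e \<noteq> 0" for n e
  proof -
    have "n mod m = d mod m" using om_eq[OF m1 rep_inv[OF q sig c]] .
    moreover have "e \<le> d \<and> n \<le> d + e \<and> d \<le> n + e \<and> even (n + e + d)" using rep_bounds[OF q c] by blast
    moreover have "d \<le> m + 1" using dP d_def by simp
    ultimately show ?thesis using cnd_arith[OF m, of n d e] by blast
  qed
  obtain v where v: "cmod v = 1" "(\<lambda>z. v * cnj z) \<in> stab P"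
    using refl_in_stab[OF q[unfolded G_def] m1 cnd] by blast
  then obtain a where "(\<lambda>z. v * cnj z) = (\<lambda>z. a * z)" using st Km_sub by blast
  thus False using refl_not_rot[OF v(1)] by blast
qed

lemma Km1: "Km 1 = {id}"
proof
  show "Km 1 \<subseteq> {id}"
  proof
    fix \<phi> assume "\<phi> \<in> Km 1"
    then obtain a where "a^1 = 1" "\<phi> = (\<lambda>z. a*z)" using Km_sub by blast
    thus "\<phi> \<in> {id}" by auto
  qed
  show "{id} \<subseteq> Km 1" unfolding Km_def using gen.gen_id by blast
qed

lemma thm3a: "stab (X2 + X2 * Y2) = Km 1"
proof -
  have "stab (X2 + X2 * Y2) = {id}"
  proof (rule set_eqI, rule iffI)
    fix \<phi> assume \<phi>: "\<phi> \<in> stab (X2 + X2 * Y2)"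
    have ot: "orthogonal_transformation \<phi>" using stab_O2[OF \<phi>] .
    obtain a where a: "cmod a = 1" "\<phi> = (\<lambda>z. a*z) \<or> \<phi> = (\<lambda>z. a * cnj z)" using O2_char[OF ot] by blast
    have inv: "\<And>z. Re (\<phi> z) + Re (\<phi> z) * Im (\<phi> z) = Re z + Re z * Im z"
      using stab_iff[OF ot] \<phi> by simp
    have p1: "\<phi> 1 = a" using a by auto
    have p2: "\<phi> (-1) = - a" using a by auto
    have "Re a + Re a * Im a = 1" using inv[of 1] p1 by simp
    moreover have "- Re a + Re a * Im a = -1" using inv[of "-1"] p2 by simp
    ultimately have ra: "Re a = 1" by linarith
    moreover have "Im a = 0" using \<open>Re a + Re a * Im a = 1\<close> ra by simp
    ultimately have "Re a = 1" "Im a = 0" by auto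
    hence a1: "a = 1" by (simp add: complex_eq_iff)
    from a(2) show "\<phi> \<in> {id}"
    proof
      assume "\<phi> = (\<lambda>z. a*z)" thus ?thesis using a1 by auto
    next
      assume "\<phi> = (\<lambda>z. a*cnj z)"
      thus ?thesis using inv[of "1 + \<i>"] a1 by simp
    qed
  next
    fix \<phi> :: "complex \<Rightarrow> complex" assume "\<phi> \<in> {id}"
    hence "\<phi> = (\<lambda>x. x)" by auto
    thus "\<phi> \<in> stab (X2 + X2 * Y2)" using stab_iff[OF orthogonal_transformation_id] by simp
  qed
  thus ?thesis using Km1 by simp
qed

lemma thm3b: assumes dP: "deg2 P < 2" shows "stab P \<noteq> Km 1"
proof
  assume st: "stab P = Km 1"
  define d where "d = deg2 P"
  define G where "G = (\<lambda>w. complex_of_real (eval2 P w))"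
  obtain Q where q: "rep d G Q" using get_rep unfolding d_def G_def by blast
  have cnd: "n = d \<or> (e = 1 \<and> (n = d + 1 \<or> n + 1 = d))" if c: "coeff (coeff Q n) e \<noteq> 0" for n e
  proof -
    have "e \<le> d \<and> n \<le> d + e \<and> d \<le> n + e \<and> even (n + e + d)" using rep_bounds[OF q c] by blast
    thus ?thesis using dP d_def by presburger
  qed
  obtain v where v: "cmod v = 1" "(\<lambda>z. v * cnj z) \<in> stab P"
    using refl_in_stab[OF q[unfolded G_def] _ cnd] by blast
  then obtain a where "(\<lambda>z. v * cnj z) = (\<lambda>z. a * z)" using st Km_sub by blast
  thus False using refl_not_rot[OF v(1)] by blast
qed

theorem mainTheorem12:
  shows "(\<forall>m::nat. m \<ge> 1 \<longrightarrow>
            stab (pm m) = Dm m \<and> (\<forall>P. deg2 P < m \<longrightarrow> stab P \<noteq> Dm m))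
       \<and> (\<forall>m::nat. m \<ge> 2 \<longrightarrow>
            stab (pm m + (X2^2 + Y2^2) * qm m) = Km m
            \<and> (\<forall>P. deg2 P < m + 2 \<longrightarrow> stab P \<noteq> Km m))
       \<and> stab (X2 + X2 * Y2) = Km 1
       \<and> (\<forall>P. deg2 P < 2 \<longrightarrow> stab P \<noteq> Km 1)"
  using thm1a thm1b thm2a thm2b thm3a thm3b by blast

end
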